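(* Suppose $\|\widehat\theta_t-\theta^*\|_{\Sigma_t}\le\beta_t$ for all $t\in[T]$ (with $\|\theta^*\|_2\le L_\theta$). Then for each episode $k$ of \texttt{UCMNLK} and all $(s,a)\in\mathcal S\times\mathcal A$: $1/(1-\gamma)\ge V_k(s)\ge V^*(s)$ and $1/(1-\gamma)\ge Q_k(s,a)\ge Q^*(s,a)$.
   Context: Setting as for \texttt{UCMNLK}: finite $\mathcal S,\mathcal A$, reward $r\in[0,1]$, true transitions $p(s'\mid s,a,\theta^* )$ of MNL form $p(s'\mid s,a,\theta)=\exp(\varphi(s,a,s')^\top\theta)/\sum_{s''\in\mathcal S_{s,a}}\exp(\varphi(s,a,s'')^\top\theta)$ on known reachable sets $\mathcal S_{s,a}$. $\widehat\theta_t,\Sigma_t$ are the online estimator's iterates; $\mathcal P_t$ is the set of $p\in[0,1]^{\mathcal S\times\mathcal A\times\mathcal S}$ with $\sum_{s'\in\mathcal S_{s,a}}p_{s,a,s'}=1$ and $\sum_{s'\in\mathcal S_{s,a}}|p_{s,a,s'}-p(s'\mid s,a,\widehat\theta_t)|\le\beta_t\sum_{s'}p(s'\mid s,a,\widehat\theta_t)\|\varphi(s,a,s')-\sum_{s''}p(s''\mid s,a,\widehat\theta_t)\varphi(s,a,s'')\|_{\Sigma_t^{-1}}+3\beta_t^2\max_{s'}\|\varphi(s,a,s')\|^2_{\Sigma_t^{-1}}$ for all $(s,a)$. For episode $k$ starting at $t_k$, $Q_k$ is the output of \texttt{DEVI}$(\gamma,\mathcal P_{t_k},N)$: $Q^{(0)}\equiv1/(1-\gamma)$,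 $V^{(n-1)}(s)=\max_aQ^{(n-1)}(s,a)$, $Q^{(n)}(s,a)=r(s,a)+\gamma\max_{p\in\mathcal P_{t_k}}\sum_{s'\in\mathcal S_{s,a}}p_{s,a,s'}V^{(n-1)}(s')$, $Q_k=Q^{(N)}$; $V_k(s)=\max_aQ_k(s,a)$. $V^*,Q^*$ are the optimal value and action-value functions of the discounted MDP with discount $\gamma$ under the true transitions, satisfying $Q^*(s,a)=r(s,a)+\gamma\sum_{s'}p(s'\mid s,a,\theta^* )V^*(s')$, $V^*(s)=\max_aQ^*(s,a)$. *)

theory Defs
  imports "HOL-Analysis.Analysis"
begin

definition wnorm :: "real^'d^'d \<Rightarrow> real^'d \<Rightarrow> real" where
  "wnorm M x = sqrt (x \<bullet> (M *v x))"

definition pos_def_mat :: "real^'d^'d \<Rightarrow> bool" where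
  "pos_def_mat M \<longleftrightarrow> transpose M = M \<and> (\<forall>x. x \<noteq> 0 \<longrightarrow> x \<bullet> (M *v x) > 0)"

definition mnl_prob ::
  "('s \<Rightarrow> 'a \<Rightarrow> 's \<Rightarrow> real^'d) \<Rightarrow> ('s \<Rightarrow> 'a \<Rightarrow> 's set) \<Rightarrow> real^'d \<Rightarrow> 's \<Rightarrow> 'a \<Rightarrow> 's \<Rightarrow> real" where
  "mnl_prob \<phi> Sr \<theta> s a s' =
     (if s' \<in> Sr s a
      then exp (\<phi> s a s' \<bullet> \<theta>) / (\<Sum>s''\<in>Sr s a. exp (\<phi> s a s'' \<bullet> \<theta>))
      else 0)"

definition conf_set ::
  "('s \<Rightarrow> 'a \<Rightarrow> 's \<Rightarrow> real^'d) \<Rightarrow> ('s \<Rightarrow> 'a \<Rightarrow> 's set) \<Rightarrow> real \<Rightarrow> real^'d^'d \<Rightarrow> real^'d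
     \<Rightarrow> ('s \<Rightarrow> 'a \<Rightarrow> 's \<Rightarrow> real) set" where
  "conf_set \<phi> Sr \<beta> \<Sigma> \<theta>h =
    {p. (\<forall>s a s'. 0 \<le> p s a s' \<and> p s a s' \<le> 1) \<and>
        (\<forall>s a. (\<Sum>s'\<in>Sr s a. p s a s') = 1 \<and>
           (\<Sum>s'\<in>Sr s a. \<bar>p s a s' - mnl_prob \<phi> Sr \<theta>h s a s'\<bar>)
             \<le> \<beta> * (\<Sum>s'\<in>Sr s a. mnl_prob \<phi> Sr \<theta>h s a s' *
                    wnorm (matrix_inv \<Sigma>)
                      (\<phi> s a s' - (\<Sum>s''\<in>Sr s a. mnl_prob \<phi> Sr \<theta>h s a s'' *\<^sub>R \<phi> s a s'')))
               + 3 * \<beta>\<^sup>2 * Max ((\<lambda>s'. (wnorm (matrix_inv \<Sigma>) (\<phi> s a s'))\<^sup>2) ` Sr s a))}"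

fun devi_Q ::
  "('s::finite \<Rightarrow> 'a::finite \<Rightarrow> real) \<Rightarrow> ('s \<Rightarrow> 'a \<Rightarrow> 's set) \<Rightarrow> real
     \<Rightarrow> ('s \<Rightarrow> 'a \<Rightarrow> 's \<Rightarrow> real) set \<Rightarrow> nat \<Rightarrow> 's \<Rightarrow> 'a \<Rightarrow> real" where
  "devi_Q r Sr \<gamma> P 0 = (\<lambda>s a. 1 / (1 - \<gamma>))"
| "devi_Q r Sr \<gamma> P (Suc n) = (\<lambda>s a. r s a + \<gamma> *
      Sup ((\<lambda>p. \<Sum>s'\<in>Sr s a. p s a s' * Max (range (devi_Q r Sr \<gamma> P n s'))) ` P))"

definition devi_V ::
  "('s::finite \<Rightarrow> 'a::finite \<Rightarrow> real) \<Rightarrow> ('s \<Rightarrow> 'a \<Rightarrow> 's set) \<Rightarrow> real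
     \<Rightarrow> ('s \<Rightarrow> 'a \<Rightarrow> 's \<Rightarrow> real) set \<Rightarrow> nat \<Rightarrow> 's \<Rightarrow> real" where
  "devi_V r Sr \<gamma> P N s = Max (range (devi_Q r Sr \<gamma> P N s))"

end

theory Submission
  imports Defs
begin


lemma exp_quad_bound:
  fixes x :: real assumes "\<bar>x\<bar> \<le> 1" shows "exp x \<le> 1 + x + x\<^sup>2"
proof (cases "x \<ge> 0")
  case True thus ?thesis using exp_bound[of x] assms by auto
next
  case False
  define u where "u = - x"
  have u: "0 \<le> u" "u \<le> 1" using False assms u_def by auto
  have l: "1 + u + u\<^sup>2 / 2 \<le> exp u" using exp_lower_Taylor_quadratic u by auto
  have pos: "0 < 1 + u + u\<^sup>2 / 2" using u by (simp add: add_pos_nonneg)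
  have "exp x = 1 / exp u" by (simp add: u_def exp_minus field_simps)
  also have "\<dots> \<le> 1 / (1 + u + u\<^sup>2 / 2)" using l pos by (simp add: frac_le)
  also have "\<dots> \<le> 1 - u + u\<^sup>2"
  proof -
    have "(1 - u + u\<^sup>2) * (1 + u + u\<^sup>2 / 2) = 1 + u^2/2 + u^3/2 + u^4/2"
      by (simp add: power2_eq_square power3_eq_cube power4_eq_xxxx field_simps)
    also have "\<dots> \<ge> 1" using u by simp
    finally show ?thesis using pos by (simp add: divide_le_eq)
  qed
  finally show ?thesis by (simp add: u_def)
qed



lemma key_bound:
  fixes Z m :: real
  assumes Z1: "1 \<le> Z" and m0: "0 \<le> m" and m1: "m < 1"
    and Zb: "Z \<le> 1 + exp m * m\<^sup>2"
  shows "2 * (Z - 1) / Z \<le> 3 * m\<^sup>2"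
proof -
  define A where "A = exp m * m\<^sup>2"
  have A0: "0 \<le> A" unfolding A_def by simp
  have "2 * (Z - 1) / Z = 2 - 2 / Z" using Z1 by (simp add: field_simps)
  also have "\<dots> \<le> 2 - 2 / (1 + A)"
    using Z1 Zb A0 unfolding A_def by (simp add: frac_le)
  also have "\<dots> = 2 * A / (1 + A)" using A0 by (simp add: field_simps)
  also have "\<dots> \<le> 3 * m\<^sup>2"
  proof -
    have e: "exp m \<le> 1 + m + m\<^sup>2" using exp_bound[of m] m0 m1 by simp
    have "exp m * (2 - 3 * m\<^sup>2) \<le> 3"
    proof (cases "2 - 3 * m\<^sup>2 \<ge> 0")
      case True
      have "exp m * (2 - 3 * m\<^sup>2) \<le> (1 + m + m\<^sup>2) * (2 - 3 * m\<^sup>2)"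
        using e True by (simp add: mult_right_mono)
      also have "\<dots> = 3 - ((1 - m)\<^sup>2 + 3 * m^3 + 3 * m^4)"
        by (simp add: power2_eq_square power3_eq_cube power4_eq_xxxx field_simps)
      also have "\<dots> \<le> 3"
      proof -
        have "0 \<le> m^3" "0 \<le> m^4" using m0 by simp_all
        moreover have "0 \<le> (1 - m)\<^sup>2" by simp
        ultimately show ?thesis by linarith
      qed
      finally show ?thesis .
    next
      case False
      hence "exp m * (2 - 3 * m\<^sup>2) \<le> 0" by (simp add: mult_nonneg_nonpos)
      thus ?thesis by simp
    qed
    hence "2 * A \<le> 3 * m\<^sup>2 * (1 + A)"
    proof -
      have "3 * m\<^sup>2 * (1 + A) - 2 * A = m\<^sup>2 * (3 - exp m * (2 - 3 * m\<^sup>2))"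
        unfolding A_def by (simp add: algebra_simps)
      also have "\<dots> \<ge> 0" using \<open>exp m * (2 - 3 * m\<^sup>2) \<le> 3\<close> by simp
      finally show ?thesis by simp
    qed
    thus ?thesis using A0 by (simp add: divide_le_eq)
  qed
  finally show ?thesis .
qed



lemma softmax_tv:
  fixes S :: "'x set" and a b :: "'x \<Rightarrow> real" and m :: real
  assumes fin: "finite S" and ne: "S \<noteq> {}" and bd: "\<And>i. i \<in> S \<Longrightarrow> \<bar>b i - a i\<bar> \<le> m"
  shows "(\<Sum>i\<in>S. \<bar>exp (b i) / (\<Sum>j\<in>S. exp (b j)) - exp (a i) / (\<Sum>j\<in>S. exp (a j))\<bar>)
     \<le> (\<Sum>i\<in>S. exp (a i) / (\<Sum>j\<in>S. exp (a j)) *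
            \<bar>(b i - a i) - (\<Sum>j\<in>S. exp (a j) / (\<Sum>j\<in>S. exp (a j)) * (b j - a j))\<bar>) + 3 * m\<^sup>2"
proof -
  define E where "E = (\<Sum>j\<in>S. exp (a j))"
  define P where "P i = exp (a i) / E" for i
  define x where "x i = b i - a i" for i
  define xb where "xb = (\<Sum>j\<in>S. P j * x j)"
  define y where "y i = x i - xb" for i
  define Z where "Z = (\<Sum>j\<in>S. P j * exp (y j))"
  have E0: "0 < E" unfolding E_def using fin ne by (simp add: sum_pos)
  have P0: "0 < P i" for i unfolding P_def using E0 by simp
  have P1: "(\<Sum>i\<in>S. P i) = 1" unfolding P_def using E0 by (simp add: sum_divide_distrib[symmetric] E_def)
  have m0: "0 \<le> m" using bd ne by (meson abs_ge_zero all_not_in_conv order_trans)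
  have Py0: "(\<Sum>i\<in>S. P i * y i) = 0"
    unfolding y_def by (simp add: right_diff_distrib sum_subtractf sum_distrib_right[symmetric] P1 xb_def)
  have Z1: "1 \<le> Z"
  proof -
    have "(\<Sum>i\<in>S. P i * (1 + y i)) \<le> Z" unfolding Z_def
      by (rule sum_mono) (simp add: P0 less_imp_le mult_left_mono exp_ge_add_one_self add.commute)
    moreover have "(\<Sum>i\<in>S. P i * (1 + y i)) = 1" by (simp add: distrib_left sum.distrib P1 Py0)
    ultimately show ?thesis by simp
  qed
  have Z0: "0 < Z" using Z1 by simp
  have expb: "exp (b i) = E * exp xb * (P i * exp (y i))" for i
  proof -
    have "E * exp xb * (P i * exp (y i)) = exp (a i) * (exp xb * exp (y i))"
      unfolding P_def using E0 by (simp add: field_simps)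
    also have "\<dots> = exp (b i)" by (simp add: y_def x_def flip: exp_add)
    finally show ?thesis by simp
  qed
  have sumb: "(\<Sum>j\<in>S. exp (b j)) = E * exp xb * Z"
    unfolding Z_def by (simp add: expb sum_distrib_left)
  have Q: "exp (b i) / (\<Sum>j\<in>S. exp (b j)) = P i * exp (y i) / Z" for i
    unfolding sumb by (subst expb) (use E0 in simp)
  have trm: "\<bar>P i * exp (y i) / Z - P i\<bar> = P i * \<bar>exp (y i) - Z\<bar> / Z" for i
  proof -
    have "P i * exp (y i) / Z - P i = P i * (exp (y i) - Z) / Z" using Z0 by (simp add: field_simps)
    thus ?thesis using P0[of i] Z0 by (simp add: abs_mult abs_divide)
  qed
  have tri: "\<bar>exp (y i) - Z\<bar> \<le> \<bar>y i\<bar> + (exp (y i) - 1 - y i) + (Z - 1)" for i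
  proof -
    have "exp (y i) - 1 - y i \<ge> 0" using exp_ge_add_one_self[of "y i"] by linarith
    thus ?thesis using Z1 by linarith
  qed
  have S1: "(\<Sum>i\<in>S. P i * \<bar>exp (y i) - Z\<bar>) \<le> (\<Sum>i\<in>S. P i * \<bar>y i\<bar>) + 2 * (Z - 1)"
  proof -
    have "(\<Sum>i\<in>S. P i * \<bar>exp (y i) - Z\<bar>) \<le> (\<Sum>i\<in>S. P i * (\<bar>y i\<bar> + (exp (y i) - 1 - y i) + (Z - 1)))"
      by (rule sum_mono, rule mult_left_mono[OF tri]) (simp add: P0 less_imp_le)
    also have "\<dots> = (\<Sum>i\<in>S. P i * \<bar>y i\<bar>) + (Z - (\<Sum>i\<in>S. P i) - (\<Sum>i\<in>S. P i * y i)) + (\<Sum>i\<in>S. P i) * (Z - 1)"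
    proof -
      have "(\<Sum>i\<in>S. P i * (\<bar>y i\<bar> + (exp (y i) - 1 - y i) + (Z - 1)))
          = (\<Sum>i\<in>S. P i * \<bar>y i\<bar>) + (\<Sum>i\<in>S. P i * exp (y i)) - (\<Sum>i\<in>S. P i) - (\<Sum>i\<in>S. P i * y i) + (\<Sum>i\<in>S. P i) * (Z - 1)"
      proof -
        have pw: "P i * (\<bar>y i\<bar> + (exp (y i) - 1 - y i) + (Z - 1)) = P i * \<bar>y i\<bar> + P i * exp (y i) - P i - P i * y i + P i * (Z - 1)" for i
          by (simp add: algebra_simps)
        show ?thesis unfolding pw sum.distrib sum_subtractf sum_distrib_right[symmetric] ..
      qed
      thus ?thesis unfolding Z_def[symmetric] by simp
    qed
    also have "\<dots> = (\<Sum>i\<in>S. P i * \<bar>y i\<bar>) + 2 * (Z - 1)" by (simp add: P1 Py0)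
    finally show ?thesis .
  qed
  have lhs: "(\<Sum>i\<in>S. \<bar>exp (b i) / (\<Sum>j\<in>S. exp (b j)) - P i\<bar>) \<le> (\<Sum>i\<in>S. P i * \<bar>y i\<bar>) + 2 * (Z - 1) / Z"
  proof -
    have "(\<Sum>i\<in>S. \<bar>exp (b i) / (\<Sum>j\<in>S. exp (b j)) - P i\<bar>) = (\<Sum>i\<in>S. P i * \<bar>exp (y i) - Z\<bar>) / Z"
      by (simp add: Q trm sum_divide_distrib)
    also have "\<dots> \<le> ((\<Sum>i\<in>S. P i * \<bar>y i\<bar>) + 2 * (Z - 1)) / Z"
      using S1 Z0 by (simp add: divide_right_mono)
    also have "\<dots> = (\<Sum>i\<in>S. P i * \<bar>y i\<bar>) / Z + 2 * (Z - 1) / Z" by (simp add: add_divide_distrib)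
    also have "(\<Sum>i\<in>S. P i * \<bar>y i\<bar>) / Z \<le> (\<Sum>i\<in>S. P i * \<bar>y i\<bar>)"
    proof -
      have "0 \<le> (\<Sum>i\<in>S. P i * \<bar>y i\<bar>)" by (simp add: P0 less_imp_le sum_nonneg)
      thus ?thesis using Z1 by (simp add: divide_le_eq mult_le_cancel_left1)
    qed
    finally show ?thesis by simp
  qed
  have key: "2 * (Z - 1) / Z \<le> 3 * m\<^sup>2"
  proof (cases "2 \<le> 3 * m\<^sup>2")
    case True
    have "2 * (Z - 1) / Z \<le> 2" using Z1 by (simp add: divide_le_eq)
    thus ?thesis using True by linarith
  next
    case False
    have m1: "m < 1"
    proof (rule ccontr)
      assume "\<not> m < 1" hence "1 \<le> m\<^sup>2" using one_le_power by (metis not_less)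
      thus False using False by simp
    qed
    have xb_bd: "\<bar>xb\<bar> \<le> m"
    proof -
      have "\<bar>xb\<bar> \<le> (\<Sum>j\<in>S. \<bar>P j * x j\<bar>)" unfolding xb_def by (rule sum_abs)
      also have "\<dots> \<le> (\<Sum>j\<in>S. P j * m)"
        by (rule sum_mono) (simp add: abs_mult P0 less_imp_le mult_left_mono bd x_def abs_of_pos)
      also have "\<dots> = m" by (simp add: sum_distrib_right[symmetric] P1)
      finally show ?thesis .
    qed
    have ex: "exp (x i) \<le> 1 + x i + m\<^sup>2" if "i \<in> S" for i
    proof -
      have "\<bar>x i\<bar> \<le> m" using bd that x_def by simp
      hence "\<bar>x i\<bar> \<le> 1" "(x i)\<^sup>2 \<le> m\<^sup>2" using m1 by (simp_all add: abs_le_square_iff[symmetric] abs_of_nonneg m0)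
      thus ?thesis using exp_quad_bound[of "x i"] by linarith
    qed
    have Zx: "Z = exp (- xb) * (\<Sum>j\<in>S. P j * exp (x j))"
      unfolding Z_def y_def by (simp add: sum_distrib_left exp_diff exp_minus field_simps)
    have "(\<Sum>j\<in>S. P j * exp (x j)) \<le> (\<Sum>j\<in>S. P j * (1 + x j + m\<^sup>2))"
      by (rule sum_mono) (simp add: P0 less_imp_le mult_left_mono ex)
    also have "\<dots> = 1 + xb + m\<^sup>2"
    proof -
      have pw: "P j * (1 + x j + m\<^sup>2) = P j + P j * x j + P j * m\<^sup>2" for j by (simp add: algebra_simps)
      show ?thesis unfolding pw sum.distrib sum_distrib_right[symmetric] P1 xb_def by simp
    qed
    finally have "Z \<le> exp (- xb) * (1 + xb + m\<^sup>2)" unfolding Zx by (simp add: mult_left_mono)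
    also have "\<dots> = exp (- xb) * (1 + xb) + exp (- xb) * m\<^sup>2" by (simp add: algebra_simps)
    also have "exp (- xb) * (1 + xb) \<le> 1"
    proof -
      have "1 + xb \<le> exp xb" by (rule exp_ge_add_one_self)
      hence "exp (- xb) * (1 + xb) \<le> exp (- xb) * exp xb" by (simp add: mult_left_mono)
      thus ?thesis by (simp flip: exp_add)
    qed
    also have "exp (- xb) * m\<^sup>2 \<le> exp m * m\<^sup>2"
      using xb_bd by (simp add: mult_right_mono)
    finally have "Z \<le> 1 + exp m * m\<^sup>2" by simp
    thus ?thesis using key_bound Z1 m0 m1 by blast
  qed
  have eqP: "exp (a i) / (\<Sum>j\<in>S. exp (a j)) = P i" for i by (simp add: P_def E_def)
  have eqx: "b i - a i = x i" for i by (simp add: x_def)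
  have eqy: "x i - xb = y i" for i by (simp add: y_def)
  show ?thesis unfolding eqP eqx xb_def[symmetric] eqy using lhs key by linarith
qed



lemma pd_nonneg: "pos_def_mat S \<Longrightarrow> 0 \<le> x \<bullet> (S *v x)"
  unfolding pos_def_mat_def by (cases "x = 0") (auto intro: less_imp_le)

lemma pd_sym: "pos_def_mat S \<Longrightarrow> w \<bullet> (S *v v) = v \<bullet> (S *v w)"
proof -
  assume "pos_def_mat S"
  hence t: "transpose S = S" unfolding pos_def_mat_def by simp
  have "v \<bullet> (S *v w) = (v v* S) \<bullet> w" by (simp add: dot_lmul_matrix)
  also have "v v* S = transpose S *v v" by simp
  also have "\<dots> = S *v v" using t by simp
  finally show ?thesis by (simp add: inner_commute)
qed

lemma pd_inv:
  fixes S :: "real^'d^'d"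
  assumes "pos_def_mat S"
  shows "S ** matrix_inv S = mat 1 \<and> matrix_inv S ** S = mat 1"
proof -
  have "\<forall>x. S *v x = 0 \<longrightarrow> x = 0"
    using assms unfolding pos_def_mat_def by (metis inner_zero_right less_irrefl)
  hence "\<exists>B. B ** S = mat 1" using matrix_left_invertible_ker by blast
  hence "invertible S" using invertible_left_inverse by blast
  hence "\<exists>A'. S ** A' = mat 1 \<and> A' ** S = mat 1" unfolding invertible_def .
  thus ?thesis unfolding matrix_inv_def by (rule someI_ex)
qed

lemma pd_cs:
  fixes S :: "real^'d^'d"
  assumes pd: "pos_def_mat S"
  shows "(w \<bullet> (S *v v))\<^sup>2 \<le> (w \<bullet> (S *v w)) * (v \<bullet> (S *v v))"
proof (cases "v = 0")
  case True thus ?thesis by simp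
next
  case False
  define B where "B = v \<bullet> (S *v v)"
  define A where "A = w \<bullet> (S *v w)"
  define c where "c = w \<bullet> (S *v v)"
  have B0: "0 < B" using pd False unfolding pos_def_mat_def B_def by blast
  define t where "t = c / B"
  have "0 \<le> (w - t *\<^sub>R v) \<bullet> (S *v (w - t *\<^sub>R v))" by (rule pd_nonneg[OF pd])
  also have "\<dots> = A - 2 * t * c + t\<^sup>2 * B"
    using pd_sym[OF pd, of v w]
    unfolding A_def B_def c_def
    by (simp add: matrix_vector_mult_diff_distrib matrix_vector_mult_scaleR inner_diff_left inner_diff_right power2_eq_square algebra_simps)
  also have "\<dots> = A - c\<^sup>2 / B" unfolding t_def using B0 by (simp add: power2_eq_square field_simps)
  finally have "c\<^sup>2 / B \<le> A" by simp
  hence "c\<^sup>2 \<le> A * B" using B0 by (simp add: divide_le_eq)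
  thus ?thesis unfolding A_def B_def c_def .
qed

lemma pd_inv_nonneg:
  fixes S :: "real^'d^'d" and u :: "real^'d"
  assumes pd: "pos_def_mat S"
  shows "0 \<le> u \<bullet> (matrix_inv S *v u)"
proof -
  define w where "w = matrix_inv S *v u"
  have Sw: "S *v w = u" unfolding w_def using pd_inv[OF pd] by (simp add: matrix_vector_mul_assoc)
  have uu: "u \<bullet> (matrix_inv S *v u) = w \<bullet> (S *v w)"
    unfolding Sw by (simp add: w_def inner_commute)
  show ?thesis unfolding uu by (rule pd_nonneg[OF pd])
qed

lemma wnorm_cs:
  fixes S :: "real^'d^'d" and u v :: "real^'d"
  assumes pd: "pos_def_mat S"
  shows "\<bar>u \<bullet> v\<bar> \<le> wnorm (matrix_inv S) u * wnorm S v"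
proof -
  define w where "w = matrix_inv S *v u"
  have Sw: "S *v w = u" unfolding w_def using pd_inv[OF pd] by (simp add: matrix_vector_mul_assoc)
  have uv: "u \<bullet> v = w \<bullet> (S *v v)"
    using pd_sym[OF pd, of w v] Sw by (simp add: inner_commute)
  have uu: "u \<bullet> (matrix_inv S *v u) = w \<bullet> (S *v w)"
    unfolding Sw by (simp add: w_def inner_commute)
  have "(u \<bullet> v)\<^sup>2 \<le> (w \<bullet> (S *v w)) * (v \<bullet> (S *v v))" unfolding uv by (rule pd_cs[OF pd])
  hence "sqrt ((u \<bullet> v)\<^sup>2) \<le> sqrt ((w \<bullet> (S *v w)) * (v \<bullet> (S *v v)))" by (rule real_sqrt_le_mono)
  thus ?thesis unfolding wnorm_def uu by (simp add: real_sqrt_mult)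
qed



lemma mnl_in_conf:
  fixes \<phi> :: "'s::finite \<Rightarrow> 'a \<Rightarrow> 's \<Rightarrow> real^'d"
    and Sr :: "'s \<Rightarrow> 'a \<Rightarrow> 's set"
    and \<Sigma> :: "real^'d^'d"
  assumes Sr_ne: "\<And>s a. Sr s a \<noteq> {}"
    and pd: "pos_def_mat \<Sigma>"
    and cf: "wnorm \<Sigma> (\<theta>h - \<theta>s) \<le> \<beta>"
  shows "mnl_prob \<phi> Sr \<theta>s \<in> conf_set \<phi> Sr \<beta> \<Sigma> \<theta>h"
proof -
  have fin: "finite (Sr s a)" for s a by simp
  have b0: "0 \<le> \<beta>" using cf unfolding wnorm_def by (meson order_trans real_sqrt_ge_zero pd_nonneg[OF pd])
  have rng: "0 \<le> mnl_prob \<phi> Sr \<theta> s a s' \<and> mnl_prob \<phi> Sr \<theta> s a s' \<le> 1" for \<theta> s a s'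
  proof (cases "s' \<in> Sr s a")
    case True
    have pos: "0 < (\<Sum>s''\<in>Sr s a. exp (\<phi> s a s'' \<bullet> \<theta>))" using Sr_ne by (simp add: sum_pos)
    have "exp (\<phi> s a s' \<bullet> \<theta>) \<le> (\<Sum>s''\<in>Sr s a. exp (\<phi> s a s'' \<bullet> \<theta>))"
      using True by (intro member_le_sum) auto
    thus ?thesis using True pos unfolding mnl_prob_def by (simp add: divide_le_eq)
  next
    case False thus ?thesis unfolding mnl_prob_def by simp
  qed
  have sum1: "(\<Sum>s'\<in>Sr s a. mnl_prob \<phi> Sr \<theta> s a s') = 1" for \<theta> s a
  proof -
    have pos: "0 < (\<Sum>s''\<in>Sr s a. exp (\<phi> s a s'' \<bullet> \<theta>))" using Sr_ne by (simp add: sum_pos)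
    have "(\<Sum>s'\<in>Sr s a. mnl_prob \<phi> Sr \<theta> s a s') = (\<Sum>s'\<in>Sr s a. exp (\<phi> s a s' \<bullet> \<theta>) / (\<Sum>s''\<in>Sr s a. exp (\<phi> s a s'' \<bullet> \<theta>)))"
      unfolding mnl_prob_def by (rule sum.cong) auto
    also have "\<dots> = 1" using pos by (simp add: sum_divide_distrib[symmetric])
    finally show ?thesis .
  qed
  have ineq: "(\<Sum>s'\<in>Sr s a. \<bar>mnl_prob \<phi> Sr \<theta>s s a s' - mnl_prob \<phi> Sr \<theta>h s a s'\<bar>)
             \<le> \<beta> * (\<Sum>s'\<in>Sr s a. mnl_prob \<phi> Sr \<theta>h s a s' *
                    wnorm (matrix_inv \<Sigma>)
                      (\<phi> s a s' - (\<Sum>s''\<in>Sr s a. mnl_prob \<phi> Sr \<theta>h s a s'' *\<^sub>R \<phi> s a s'')))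
               + 3 * \<beta>\<^sup>2 * Max ((\<lambda>s'. (wnorm (matrix_inv \<Sigma>) (\<phi> s a s'))\<^sup>2) ` Sr s a)" for s a
  proof -
    define S where "S = Sr s a"
    define M where "M = Max ((\<lambda>s'. (wnorm (matrix_inv \<Sigma>) (\<phi> s a s'))\<^sup>2) ` S)"
    define A where "A i = \<phi> s a i \<bullet> \<theta>h" for i
    define B where "B i = \<phi> s a i \<bullet> \<theta>s" for i
    define p where "p i = mnl_prob \<phi> Sr \<theta>h s a i" for i
    define fb where "fb = (\<Sum>j\<in>S. p j *\<^sub>R \<phi> s a j)"
    define v where "v = \<theta>h - \<theta>s"
    have Sne: "S \<noteq> {}" unfolding S_def using Sr_ne by simp
    have finS: "finite S" by simp
    have wn0: "0 \<le> wnorm (matrix_inv \<Sigma>) x" for x unfolding wnorm_def using pd_inv_nonneg[OF pd] by simp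
    have Mge: "(wnorm (matrix_inv \<Sigma>) (\<phi> s a i))\<^sup>2 \<le> M" if "i \<in> S" for i
      unfolding M_def using that finS by (intro Max_ge) auto
    have M0: "0 \<le> M" using Mge Sne by (meson all_not_in_conv order_trans zero_le_power2)
    define m where "m = \<beta> * sqrt M"
    have pA: "p i = exp (A i) / (\<Sum>j\<in>S. exp (A j))" if "i \<in> S" for i
      using that unfolding p_def mnl_prob_def A_def S_def by simp
    have qB: "mnl_prob \<phi> Sr \<theta>s s a i = exp (B i) / (\<Sum>j\<in>S. exp (B j))" if "i \<in> S" for i
      using that unfolding mnl_prob_def B_def S_def by simp
    have BA: "B i - A i = - (\<phi> s a i \<bullet> v)" for i unfolding A_def B_def v_def by (simp add: inner_diff_right)
    have bd: "\<bar>B i - A i\<bar> \<le> m" if "i \<in> S" for i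
    proof -
      have "\<bar>B i - A i\<bar> \<le> wnorm (matrix_inv \<Sigma>) (\<phi> s a i) * wnorm \<Sigma> v"
        unfolding BA abs_minus_cancel by (rule wnorm_cs[OF pd])
      also have "\<dots> \<le> sqrt M * \<beta>"
      proof (rule mult_mono)
        have "wnorm (matrix_inv \<Sigma>) (\<phi> s a i) = sqrt ((wnorm (matrix_inv \<Sigma>) (\<phi> s a i))\<^sup>2)" using wn0 by simp
        also have "\<dots> \<le> sqrt M" using Mge[OF that] by (rule real_sqrt_le_mono)
        finally show "wnorm (matrix_inv \<Sigma>) (\<phi> s a i) \<le> sqrt M" .
        show "wnorm \<Sigma> v \<le> \<beta>" using cf v_def by simp
        show "0 \<le> sqrt M" using M0 by simp
        show "0 \<le> wnorm \<Sigma> v" unfolding wnorm_def using pd_nonneg[OF pd] by simp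
      qed
      finally show ?thesis unfolding m_def by (simp add: mult.commute)
    qed
    have tv: "(\<Sum>i\<in>S. \<bar>exp (B i) / (\<Sum>j\<in>S. exp (B j)) - exp (A i) / (\<Sum>j\<in>S. exp (A j))\<bar>)
     \<le> (\<Sum>i\<in>S. exp (A i) / (\<Sum>j\<in>S. exp (A j)) *
            \<bar>(B i - A i) - (\<Sum>j\<in>S. exp (A j) / (\<Sum>j\<in>S. exp (A j)) * (B j - A j))\<bar>) + 3 * m\<^sup>2"
      by (rule softmax_tv[OF finS Sne bd])
    have lhs: "(\<Sum>s'\<in>Sr s a. \<bar>mnl_prob \<phi> Sr \<theta>s s a s' - mnl_prob \<phi> Sr \<theta>h s a s'\<bar>)
        = (\<Sum>i\<in>S. \<bar>exp (B i) / (\<Sum>j\<in>S. exp (B j)) - exp (A i) / (\<Sum>j\<in>S. exp (A j))\<bar>)"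
      unfolding S_def by (rule sum.cong) (auto simp: qB[unfolded S_def] pA[unfolded S_def, symmetric] p_def)
    have inner_eq: "(B i - A i) - (\<Sum>j\<in>S. exp (A j) / (\<Sum>j\<in>S. exp (A j)) * (B j - A j)) = - ((\<phi> s a i - fb) \<bullet> v)" for i
    proof -
      have "(\<Sum>j\<in>S. exp (A j) / (\<Sum>j\<in>S. exp (A j)) * (B j - A j)) = (\<Sum>j\<in>S. p j * (B j - A j))"
        by (rule sum.cong) (simp_all add: pA)
      also have "\<dots> = - (fb \<bullet> v)" unfolding fb_def BA by (simp add: inner_sum_left sum_negf)
      finally show ?thesis unfolding BA by (simp add: inner_diff_left)
    qed
    have rhs1: "(\<Sum>i\<in>S. exp (A i) / (\<Sum>j\<in>S. exp (A j)) *
            \<bar>(B i - A i) - (\<Sum>j\<in>S. exp (A j) / (\<Sum>j\<in>S. exp (A j)) * (B j - A j))\<bar>)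
        \<le> (\<Sum>i\<in>S. p i * (wnorm (matrix_inv \<Sigma>) (\<phi> s a i - fb) * \<beta>))"
    proof (rule sum_mono)
      fix i assume i: "i \<in> S"
      have "\<bar>(B i - A i) - (\<Sum>j\<in>S. exp (A j) / (\<Sum>j\<in>S. exp (A j)) * (B j - A j))\<bar>
          \<le> wnorm (matrix_inv \<Sigma>) (\<phi> s a i - fb) * wnorm \<Sigma> v"
        unfolding inner_eq abs_minus_cancel by (rule wnorm_cs[OF pd])
      also have "\<dots> \<le> wnorm (matrix_inv \<Sigma>) (\<phi> s a i - fb) * \<beta>"
        using cf v_def wn0 by (simp add: mult_left_mono)
      finally have "\<bar>(B i - A i) - (\<Sum>j\<in>S. exp (A j) / (\<Sum>j\<in>S. exp (A j)) * (B j - A j))\<bar>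
          \<le> wnorm (matrix_inv \<Sigma>) (\<phi> s a i - fb) * \<beta>" .
      moreover have "0 \<le> p i" unfolding p_def using rng by blast
      ultimately show "exp (A i) / (\<Sum>j\<in>S. exp (A j)) *
            \<bar>(B i - A i) - (\<Sum>j\<in>S. exp (A j) / (\<Sum>j\<in>S. exp (A j)) * (B j - A j))\<bar>
        \<le> p i * (wnorm (matrix_inv \<Sigma>) (\<phi> s a i - fb) * \<beta>)"
        unfolding pA[OF i, symmetric] by (rule mult_left_mono)
    qed
    have rhs2: "(\<Sum>i\<in>S. p i * (wnorm (matrix_inv \<Sigma>) (\<phi> s a i - fb) * \<beta>))
        = \<beta> * (\<Sum>s'\<in>Sr s a. mnl_prob \<phi> Sr \<theta>h s a s' *
                    wnorm (matrix_inv \<Sigma>)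
                      (\<phi> s a s' - (\<Sum>s''\<in>Sr s a. mnl_prob \<phi> Sr \<theta>h s a s'' *\<^sub>R \<phi> s a s'')))"
      unfolding S_def fb_def p_def by (simp add: sum_distrib_left algebra_simps)
    have m2: "3 * m\<^sup>2 = 3 * \<beta>\<^sup>2 * Max ((\<lambda>s'. (wnorm (matrix_inv \<Sigma>) (\<phi> s a s'))\<^sup>2) ` Sr s a)"
      unfolding m_def M_def[symmetric] S_def[symmetric] using M0 by (simp add: power_mult_distrib)
    show ?thesis using tv lhs rhs1 rhs2 m2 by linarith
  qed
  show ?thesis unfolding conf_set_def using rng sum1 ineq by blast
qed



theorem lemma6:
  fixes r :: "'s::finite \<Rightarrow> 'a::finite \<Rightarrow> real"
    and \<phi> :: "'s \<Rightarrow> 'a \<Rightarrow> 's \<Rightarrow> real^'d::finite"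
    and Sr :: "'s \<Rightarrow> 'a \<Rightarrow> 's set"
    and \<gamma> L\<theta> :: real
    and \<theta>star :: "real^'d"
    and \<theta>h :: "nat \<Rightarrow> real^'d"
    and \<Sigma> :: "nat \<Rightarrow> real^'d^'d"
    and \<beta> :: "nat \<Rightarrow> real"
    and T tk N :: nat
    and Vstar :: "'s \<Rightarrow> real" and Qstar :: "'s \<Rightarrow> 'a \<Rightarrow> real"
  assumes r_range: "\<And>s a. 0 \<le> r s a \<and> r s a \<le> 1"
    and gamma: "0 \<le> \<gamma>" "\<gamma> < 1"
    and Sr_ne: "\<And>s a. Sr s a \<noteq> {}"
    and Sigma_pd: "\<And>t. pos_def_mat (\<Sigma> t)"
    and theta_bound: "norm \<theta>star \<le> L\<theta>"
    and conf: "\<And>t. t \<in> {1..T} \<Longrightarrow> wnorm (\<Sigma> t) (\<theta>h t - \<theta>star) \<le> \<beta> t"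
    and tk: "tk \<in> {1..T}"
    and Qstar_eq: "\<And>s a. Qstar s a = r s a + \<gamma> * (\<Sum>s'\<in>Sr s a. mnl_prob \<phi> Sr \<theta>star s a s' * Vstar s')"
    and Vstar_eq: "\<And>s. Vstar s = Max (range (Qstar s))"
  shows "\<forall>s a.
           1 / (1 - \<gamma>) \<ge> devi_V r Sr \<gamma> (conf_set \<phi> Sr (\<beta> tk) (\<Sigma> tk) (\<theta>h tk)) N s
         \<and> devi_V r Sr \<gamma> (conf_set \<phi> Sr (\<beta> tk) (\<Sigma> tk) (\<theta>h tk)) N s \<ge> Vstar s
         \<and> 1 / (1 - \<gamma>) \<ge> devi_Q r Sr \<gamma> (conf_set \<phi> Sr (\<beta> tk) (\<Sigma> tk) (\<theta>h tk)) N s a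
         \<and> devi_Q r Sr \<gamma> (conf_set \<phi> Sr (\<beta> tk) (\<Sigma> tk) (\<theta>h tk)) N s a \<ge> Qstar s a"
proof -
  define P where "P = conf_set \<phi> Sr (\<beta> tk) (\<Sigma> tk) (\<theta>h tk)"
  define C where "C = 1 / (1 - \<gamma>)"
  define ps where "ps = mnl_prob \<phi> Sr \<theta>star"
  have C1: "1 + \<gamma> * C = C" unfolding C_def using gamma by (simp add: field_simps)
  have pin: "ps \<in> P" unfolding P_def ps_def
    by (rule mnl_in_conf[OF Sr_ne Sigma_pd conf[OF tk]])
  have Pprop: "\<And>p s a s'. p \<in> P \<Longrightarrow> 0 \<le> p s a s'" "\<And>p s a. p \<in> P \<Longrightarrow> (\<Sum>s'\<in>Sr s a. p s a s') = 1"
    unfolding P_def conf_set_def by blast+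
  have avg_le: "(\<Sum>s'\<in>Sr s a. p s a s' * f s') \<le> c" if "p \<in> P" "\<And>s'. f s' \<le> c" for p f s a c
  proof -
    have "(\<Sum>s'\<in>Sr s a. p s a s' * f s') \<le> (\<Sum>s'\<in>Sr s a. p s a s' * c)"
      by (rule sum_mono) (simp add: mult_left_mono Pprop(1)[OF that(1)] that(2))
    also have "\<dots> = c" using Pprop(2)[OF that(1)] by (simp add: sum_distrib_right[symmetric])
    finally show ?thesis .
  qed
  have avg_mono: "(\<Sum>s'\<in>Sr s a. p s a s' * f s') \<le> (\<Sum>s'\<in>Sr s a. p s a s' * g s')"
    if "p \<in> P" "\<And>s'. f s' \<le> g s'" for p f g s a
    by (rule sum_mono) (simp add: mult_left_mono Pprop(1)[OF that(1)] that(2))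
  have Vstar_le: "Vstar s \<le> C" for s
  proof -
    define Mv where "Mv = Max (range Vstar)"
    have "Mv \<in> range Vstar" unfolding Mv_def by (rule Max_in) auto
    then obtain s0 where s0: "Vstar s0 = Mv" by auto
    have "Max (range (Qstar s0)) \<in> range (Qstar s0)" by (rule Max_in) auto
    then obtain a0 where a0: "Vstar s0 = Qstar s0 a0" by (metis Vstar_eq rangeE)
    have le: "Vstar s' \<le> Mv" for s' unfolding Mv_def by (rule Max_ge) auto
    have "Mv = r s0 a0 + \<gamma> * (\<Sum>s'\<in>Sr s0 a0. ps s0 a0 s' * Vstar s')"
      using s0 a0 Qstar_eq ps_def by simp
    also have "\<dots> \<le> 1 + \<gamma> * Mv"
      using r_range[of s0 a0] avg_le[OF pin le, of s0 a0] gamma by (simp add: mult_left_mono add_mono)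
    finally have "Mv * (1 - \<gamma>) \<le> 1" by (simp add: algebra_simps)
    hence "Mv \<le> C" unfolding C_def using gamma by (simp add: le_divide_eq)
    thus ?thesis using le[of s] by simp
  qed
  have Qs_le_V: "Qstar s a \<le> Vstar s" for s a unfolding Vstar_eq by (rule Max_ge) auto
  have main: "\<forall>s a. Qstar s a \<le> devi_Q r Sr \<gamma> P n s a \<and> devi_Q r Sr \<gamma> P n s a \<le> C" for n
  proof (induction n)
    case 0
    show ?case using Qs_le_V Vstar_le C_def by (auto intro: order_trans)
  next
    case (Suc n)
    define Vn where "Vn s' = Max (range (devi_Q r Sr \<gamma> P n s'))" for s'
    have VnC: "Vn s' \<le> C" for s' unfolding Vn_def using Suc.IH by (subst Max_le_iff) auto
    have VsVn: "Vstar s' \<le> Vn s'" for s'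
    proof -
      have "Max (range (Qstar s')) \<in> range (Qstar s')" by (rule Max_in) auto
      then obtain a' where a': "Vstar s' = Qstar s' a'" by (metis Vstar_eq rangeE)
      have "devi_Q r Sr \<gamma> P n s' a' \<le> Vn s'" unfolding Vn_def by (rule Max_ge) auto
      thus ?thesis using a' Suc.IH by (metis order_trans)
    qed
    show ?case
    proof (intro allI conjI)
      fix s a
      define f where "f p = (\<Sum>s'\<in>Sr s a. p s a s' * Vn s')" for p :: "'s \<Rightarrow> 'a \<Rightarrow> 's \<Rightarrow> real"
      have eq: "devi_Q r Sr \<gamma> P (Suc n) s a = r s a + \<gamma> * Sup (f ` P)"
        unfolding f_def Vn_def by simp
      have fC: "f p \<le> C" if "p \<in> P" for p unfolding f_def by (rule avg_le[OF that VnC])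
      have bdd: "bdd_above (f ` P)" using fC by (intro bdd_aboveI[of _ C]) auto
      have PNE: "P \<noteq> {}" using pin by auto
      have supC: "Sup (f ` P) \<le> C" using fC PNE by (intro cSUP_least) auto
      have supge: "f ps \<le> Sup (f ` P)" by (rule cSUP_upper[OF pin bdd])
      have fps: "(\<Sum>s'\<in>Sr s a. ps s a s' * Vstar s') \<le> f ps" unfolding f_def
        by (rule avg_mono[OF pin VsVn])
      show "devi_Q r Sr \<gamma> P (Suc n) s a \<le> C"
      proof -
        have "devi_Q r Sr \<gamma> P (Suc n) s a \<le> 1 + \<gamma> * C"
          unfolding eq using r_range[of s a] supC gamma by (simp add: add_mono mult_left_mono)
        thus ?thesis using C1 by simp
      qed
      show "Qstar s a \<le> devi_Q r Sr \<gamma> P (Suc n) s a"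
        unfolding eq Qstar_eq ps_def[symmetric] using supge fps gamma
        by (simp add: mult_left_mono)
    qed
  qed
  show ?thesis
  proof (intro allI conjI)
    fix s a
    show "devi_Q r Sr \<gamma> (conf_set \<phi> Sr (\<beta> tk) (\<Sigma> tk) (\<theta>h tk)) N s a \<le> 1 / (1 - \<gamma>)"
      using main[of N] unfolding P_def C_def by blast
    show "Qstar s a \<le> devi_Q r Sr \<gamma> (conf_set \<phi> Sr (\<beta> tk) (\<Sigma> tk) (\<theta>h tk)) N s a"
      using main[of N] unfolding P_def by blast
    show "devi_V r Sr \<gamma> (conf_set \<phi> Sr (\<beta> tk) (\<Sigma> tk) (\<theta>h tk)) N s \<le> 1 / (1 - \<gamma>)"
      unfolding devi_V_def using main[of N] unfolding P_def C_def by (subst Max_le_iff) auto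
    show "Vstar s \<le> devi_V r Sr \<gamma> (conf_set \<phi> Sr (\<beta> tk) (\<Sigma> tk) (\<theta>h tk)) N s"
    proof -
      have "Max (range (Qstar s)) \<in> range (Qstar s)" by (rule Max_in) auto
      then obtain a' where a': "Vstar s = Qstar s a'" by (metis Vstar_eq rangeE)
      have "devi_Q r Sr \<gamma> P N s a' \<le> devi_V r Sr \<gamma> P N s" unfolding devi_V_def by (rule Max_ge) auto
      thus ?thesis using a' main[of N] unfolding P_def by (metis order_trans)
    qed
  qed
qed


end
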